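(* Let $m\in\mathbb Z_+$ and let $J_1\sqcup\cdots\sqcup J_\ell$ be a partition of $[m]$ such that each $J_k$ is a set of contiguous integers and every element of $J_k$ precedes every element of $J_{k+1}$. Let $a_k=\min J_k$, $b_k=\max J_k$, $m_k=|J_k|$. Let $A\in[0,1]^{n\times m}$ have non-decreasing rows and non-decreasing columns, and suppose $\sum_{i=1}^n(A_{i,b_k}-A_{i,a_k})\le\chi$ for each $k\in[\ell]$ and some $\chi\ge0$. Suppose further that there are positive reals $\rho,\rho_1,\dots,\rho_\ell$ and a permutation $\pi$ of $[n]$ such that for every $i\in[n]$: (i) $\sum_{j=1}^m|A_{\pi(i),j}-A_{i,j}|\le\rho$, and (ii) $\sum_{j\in J_k}|A_{\pi(i),j}-A_{i,j}|\le\rho_k$ for each $k\in[\ell]$. Then \[ \sum_{i=1}^n\sum_{j=1}^m(A_{\pi(i),j}-A_{i,j})^2\le2\chi\sum_{k=1}^\ell\rho_k+n\rho\max_{k\in[\ell]}\frac{\rho_k}{m_k}. \] *)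

theory Defs
  imports "HOL-Analysis.Analysis"
begin

end

theory Submission
  imports Defs
begin

theorem lemma12:
  fixes m n L :: nat
    and J :: "nat \<Rightarrow> nat set"
    and A :: "nat \<Rightarrow> nat \<Rightarrow> real"
    and chi rho :: real
    and rhok :: "nat \<Rightarrow> real"
    and p :: "nat \<Rightarrow> nat"
  assumes m_pos: "m \<ge> 1"
    and J_nonempty: "\<forall>k\<in>{1..L}. J k \<noteq> {}"
    and J_cover: "(\<Union>k\<in>{1..L}. J k) = {1..m}"
    and J_disj: "\<forall>k\<in>{1..L}. \<forall>k'\<in>{1..L}. k \<noteq> k' \<longrightarrow> J k \<inter> J k' = {}"
    and J_contig: "\<forall>k\<in>{1..L}. J k = {Min (J k)..Max (J k)}"
    and J_ordered: "\<forall>k\<in>{1..<L}. \<forall>x\<in>J k. \<forall>y\<in>J (k + 1). x < y"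
    and A_range: "\<forall>i\<in>{1..n}. \<forall>j\<in>{1..m}. 0 \<le> A i j \<and> A i j \<le> 1"
    and A_rows: "\<forall>i\<in>{1..n}. \<forall>j\<in>{1..m}. \<forall>j'\<in>{1..m}. j \<le> j' \<longrightarrow> A i j \<le> A i j'"
    and A_cols: "\<forall>j\<in>{1..m}. \<forall>i\<in>{1..n}. \<forall>i'\<in>{1..n}. i \<le> i' \<longrightarrow> A i j \<le> A i' j"
    and chi_nonneg: "chi \<ge> 0"
    and chi_bound: "\<forall>k\<in>{1..L}. (\<Sum>i=1..n. A i (Max (J k)) - A i (Min (J k))) \<le> chi"
    and rho_pos: "rho > 0"
    and rhok_pos: "\<forall>k\<in>{1..L}. rhok k > 0"
    and pi_perm: "p permutes {1..n}"
    and cond_i: "\<forall>i\<in>{1..n}. (\<Sum>j=1..m. \<bar>A (p i) j - A i j\<bar>) \<le> rho"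
    and cond_ii: "\<forall>i\<in>{1..n}. \<forall>k\<in>{1..L}. (\<Sum>j\<in>J k. \<bar>A (p i) j - A i j\<bar>) \<le> rhok k"
  shows "(\<Sum>i=1..n. \<Sum>j=1..m. (A (p i) j - A i j)^2)
         \<le> 2 * chi * (\<Sum>k=1..L. rhok k)
           + real n * rho * Max ((\<lambda>k. rhok k / real (card (J k))) ` {1..L})"
proof -
  define a where "a k = Min (J k)" for k
  define b where "b k = Max (J k)" for k
  define w where "w i k = A i (b k) - A i (a k)" for i k
  define d where "d i j = A (p i) j - A i j" for i j
  define M where "M = Max ((\<lambda>k. rhok k / real (card (J k))) ` {1..L})"
  have Jsub: "J k \<subseteq> {1..m}" if "k \<in> {1..L}" for k using J_cover that by blast
  have Jfin: "finite (J k)" if "k \<in> {1..L}" for k using Jsub[OF that] finite_subset by blast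
  have L1: "L \<ge> 1"
  proof (rule ccontr)
    assume "\<not> L \<ge> 1" then have "{1..L} = {}" by auto
    then show False using J_cover m_pos by auto
  qed
  have cardpos: "real (card (J k)) > 0" if "k \<in> {1..L}" for k
    using Jfin[OF that] J_nonempty that by (simp add: card_gt_0_iff)
  have abJ: "a k \<in> J k" "b k \<in> J k" if "k \<in> {1..L}" for k
    using Jfin[OF that] J_nonempty that unfolding a_def b_def by auto
  have jab: "a k \<le> j \<and> j \<le> b k" if "k \<in> {1..L}" "j \<in> J k" for k j
    using Jfin[OF that(1)] that unfolding a_def b_def by auto
  have pin: "p i \<in> {1..n}" if "i \<in> {1..n}" for i
    using permutes_in_image[OF pi_perm] that by blast
  have osc: "\<bar>A i j - A i j'\<bar> \<le> w i k" if "i \<in> {1..n}" "k \<in> {1..L}" "j \<in> J k" "j' \<in> J k" for i k j j'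
  proof -
    have s: "a k \<in> {1..m}" "b k \<in> {1..m}" "j \<in> {1..m}" "j' \<in> {1..m}"
      using Jsub[OF that(2)] abJ[OF that(2)] that by auto
    have "A i (a k) \<le> A i j" "A i j \<le> A i (b k)" "A i (a k) \<le> A i j'" "A i j' \<le> A i (b k)"
      using A_rows that(1) s jab[OF that(2) that(3)] jab[OF that(2) that(4)] by auto
    then show ?thesis unfolding w_def by linarith
  qed
  have wnn: "w i k \<ge> 0" if "i \<in> {1..n}" "k \<in> {1..L}" for i k
    using osc[OF that abJ(1)[OF that(2)] abJ(1)[OF that(2)]] by simp
  have M_ge: "rhok k / real (card (J k)) \<le> M" if "k \<in> {1..L}" for k
    unfolding M_def using that by (intro Max_ge) auto
  have M_nn: "M \<ge> 0" using M_ge[of 1] L1 rhok_pos cardpos[of 1]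
    by (smt (verit, best) atLeastAtMost_iff divide_pos_pos order_refl)
  have key1: "\<bar>d i j\<bar> \<le> rhok k / real (card (J k)) + (w (p i) k + w i k)"
    if i: "i \<in> {1..n}" and k: "k \<in> {1..L}" and j: "j \<in> J k" for i j k
  proof -
    have "\<bar>d i j\<bar> \<le> \<bar>d i j'\<bar> + (w (p i) k + w i k)" if "j' \<in> J k" for j'
      using osc[OF pin[OF i] k j that] osc[OF i k j that] unfolding d_def by linarith
    then have "(\<Sum>j'\<in>J k. \<bar>d i j\<bar>) \<le> (\<Sum>j'\<in>J k. \<bar>d i j'\<bar> + (w (p i) k + w i k))"
      by (rule sum_mono)
    then have "real (card (J k)) * \<bar>d i j\<bar> \<le> (\<Sum>j'\<in>J k. \<bar>d i j'\<bar>) + real (card (J k)) * (w (p i) k + w i k)"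
      by (simp add: sum.distrib)
    also have "\<dots> \<le> rhok k + real (card (J k)) * (w (p i) k + w i k)"
      using cond_ii i k unfolding d_def by auto
    finally have "real (card (J k)) * \<bar>d i j\<bar> \<le> rhok k + real (card (J k)) * (w (p i) k + w i k)" .
    then show ?thesis using cardpos[OF k] by (simp add: field_simps)
  qed
  have key2: "(\<Sum>j\<in>J k. (d i j)^2) \<le> (\<Sum>j\<in>J k. \<bar>d i j\<bar>) * M + rhok k * (w (p i) k + w i k)"
    if i: "i \<in> {1..n}" and k: "k \<in> {1..L}" for i k
  proof -
    let ?W = "w (p i) k + w i k"
    let ?r = "rhok k / real (card (J k))"
    have "(\<Sum>j\<in>J k. (d i j)^2) \<le> (\<Sum>j\<in>J k. \<bar>d i j\<bar> * (?r + ?W))"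
    proof (rule sum_mono)
      fix j assume j: "j \<in> J k"
      have "(d i j)^2 = \<bar>d i j\<bar> * \<bar>d i j\<bar>" by (simp add: power2_eq_square abs_mult_self_eq)
      also have "\<dots> \<le> \<bar>d i j\<bar> * (?r + ?W)" using key1[OF i k j] by (intro mult_left_mono) auto
      finally show "(d i j)^2 \<le> \<bar>d i j\<bar> * (?r + ?W)" .
    qed
    also have "\<dots> = (\<Sum>j\<in>J k. \<bar>d i j\<bar>) * ?r + (\<Sum>j\<in>J k. \<bar>d i j\<bar>) * ?W"
      by (simp only: sum_distrib_right distrib_left sum.distrib)
    also have "\<dots> \<le> (\<Sum>j\<in>J k. \<bar>d i j\<bar>) * M + rhok k * ?W"
    proof (rule add_mono)
      show "(\<Sum>j\<in>J k. \<bar>d i j\<bar>) * ?r \<le> (\<Sum>j\<in>J k. \<bar>d i j\<bar>) * M"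
        using M_ge[OF k] by (intro mult_left_mono) (auto intro: sum_nonneg)
      have "?W \<ge> 0" using wnn[OF pin[OF i] k] wnn[OF i k] by simp
      then show "(\<Sum>j\<in>J k. \<bar>d i j\<bar>) * ?W \<le> rhok k * ?W"
        using cond_ii i k unfolding d_def by (intro mult_right_mono) auto
    qed
    finally show ?thesis .
  qed
  have split: "(\<Sum>j=1..m. f j) = (\<Sum>k=1..L. \<Sum>j\<in>J k. f j)" for f :: "nat \<Rightarrow> real"
  proof -
    have "(\<Sum>j=1..m. f j) = (\<Sum>j\<in>(\<Union>k\<in>{1..L}. J k). f j)" using J_cover by simp
    also have "\<dots> = (\<Sum>k=1..L. \<Sum>j\<in>J k. f j)"
      using Jfin J_disj by (intro sum.UNION_disjoint) auto
    finally show ?thesis .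
  qed
  have row: "(\<Sum>j=1..m. (d i j)^2) \<le> M * rho + (\<Sum>k=1..L. rhok k * (w (p i) k + w i k))"
    if i: "i \<in> {1..n}" for i
  proof -
    have "(\<Sum>j=1..m. (d i j)^2) = (\<Sum>k=1..L. \<Sum>j\<in>J k. (d i j)^2)" by (rule split)
    also have "\<dots> \<le> (\<Sum>k=1..L. (\<Sum>j\<in>J k. \<bar>d i j\<bar>) * M + rhok k * (w (p i) k + w i k))"
      using key2[OF i] by (intro sum_mono) auto
    also have "\<dots> = M * (\<Sum>k=1..L. \<Sum>j\<in>J k. \<bar>d i j\<bar>) + (\<Sum>k=1..L. rhok k * (w (p i) k + w i k))"
      by (simp add: sum.distrib sum_distrib_left mult.commute)
    also have "(\<Sum>k=1..L. \<Sum>j\<in>J k. \<bar>d i j\<bar>) = (\<Sum>j=1..m. \<bar>d i j\<bar>)" by (rule split[symmetric])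
    also have "M * \<dots> \<le> M * rho" using cond_i i M_nn unfolding d_def by (simp add: mult_left_mono)
    finally show ?thesis by simp
  qed
  have perm: "(\<Sum>i=1..n. w (p i) k) = (\<Sum>i=1..n. w i k)" for k
    using sum.permute[OF pi_perm, of "\<lambda>i. w i k"] by (simp add: comp_def)
  have "(\<Sum>i=1..n. \<Sum>j=1..m. (d i j)^2) \<le> (\<Sum>i=1..n. M * rho + (\<Sum>k=1..L. rhok k * (w (p i) k + w i k)))"
    using row by (intro sum_mono) auto
  also have "\<dots> = real n * M * rho + (\<Sum>k=1..L. rhok k * ((\<Sum>i=1..n. w (p i) k) + (\<Sum>i=1..n. w i k)))"
  proof -
    have "(\<Sum>i=1..n. M * rho + (\<Sum>k=1..L. rhok k * (w (p i) k + w i k)))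
        = real n * M * rho + (\<Sum>i=1..n. \<Sum>k=1..L. rhok k * (w (p i) k + w i k))"
      by (simp add: sum.distrib)
    also have "(\<Sum>i=1..n. \<Sum>k=1..L. rhok k * (w (p i) k + w i k))
        = (\<Sum>k=1..L. \<Sum>i=1..n. rhok k * (w (p i) k + w i k))"
      by (rule sum.swap)
    also have "\<dots> = (\<Sum>k=1..L. rhok k * ((\<Sum>i=1..n. w (p i) k) + (\<Sum>i=1..n. w i k)))"
      by (simp only: sum_distrib_left[symmetric] sum.distrib)
    finally show ?thesis .
  qed
  also have "\<dots> = real n * M * rho + (\<Sum>k=1..L. 2 * rhok k * (\<Sum>i=1..n. w i k))"
  proof -
    show ?thesis unfolding perm by (rule arg_cong[where f="(+) _"], rule sum.cong[OF refl]) simp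
  qed
  also have "\<dots> \<le> real n * M * rho + (\<Sum>k=1..L. 2 * rhok k * chi)"
  proof -
    have "2 * rhok k * (\<Sum>i=1..n. w i k) \<le> 2 * rhok k * chi" if k: "k \<in> {1..L}" for k
    proof (rule mult_left_mono)
      have "(\<Sum>i=1..n. w i k) = (\<Sum>i=1..n. A i (Max (J k)) - A i (Min (J k)))"
        unfolding w_def a_def b_def by (rule refl)
      then show "(\<Sum>i=1..n. w i k) \<le> chi" using chi_bound k by simp
      show "0 \<le> 2 * rhok k" using rhok_pos k by (simp add: less_imp_le)
    qed
    then have "(\<Sum>k=1..L. 2 * rhok k * (\<Sum>i=1..n. w i k)) \<le> (\<Sum>k=1..L. 2 * rhok k * chi)"
      by (rule sum_mono)
    then show ?thesis by (rule add_left_mono)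
  qed
  also have "\<dots> = real n * M * rho + 2 * chi * (\<Sum>k=1..L. rhok k)"
    by (simp add: sum_distrib_left mult_ac)
  finally have fin: "(\<Sum>i=1..n. \<Sum>j=1..m. (d i j)^2) \<le> real n * M * rho + 2 * chi * (\<Sum>k=1..L. rhok k)" .
  have "real n * M * rho = real n * rho * M" by (simp add: mult_ac)
  with fin show ?thesis unfolding d_def M_def by linarith
qed

end
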